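(* Let $n\ge 1$, $U_n$ the family of bounded subsets of $\mathbb R^n$, $H\subset\mathbb R^n$ locally finite, and $\mu_H:U_n\to B_2$, $\mu_H(A)=\pi(|A\cap H|)$. Then for every $A\in U_n$ and every $x\in A$ there exist $\varepsilon>0$ and $a\in B_2$ such that for every $B\in U_n$ with $x\in B$ and $d(B)<\varepsilon$ one has $\mu_H(B)=a$.
   Context: $B_2=\{0,1\}$. $H$ is locally finite if $A\cap H$ is finite for every bounded $A$. $\pi(m)=1$ if $m$ is odd and $0$ if $m$ is even. For a bounded $B\subset\mathbb R^n$, its diameter is $d(B)=\sup_{x,y\in B}\|x-y\|$ with $\|\cdot\|$ the Euclidean norm. *)

theory Defs
  imports "HOL-Analysis.Analysis"
begin

definition locally_finite_set :: "'a::metric_space set \<Rightarrow> bool" where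
  "locally_finite_set H \<longleftrightarrow> (\<forall>A. bounded A \<longrightarrow> finite (A \<inter> H))"

text \<open>pi(m) = 1 if m odd, 0 if m even; values in B_2 = {0,1}.\<close>
definition parity_pi :: "nat \<Rightarrow> nat" where
  "parity_pi m = (if odd m then 1 else 0)"

text \<open>mu_H(A) = pi(|A \<inter> H|), meant for bounded A (then A \<inter> H is finite).\<close>
definition mu_H :: "'a set \<Rightarrow> 'a set \<Rightarrow> nat" where
  "mu_H H A = parity_pi (card (A \<inter> H))"

end

theory Submission
  imports Defs
begin

theorem proposition5p7:
  fixes H :: "(real ^ 'n) set"
  assumes "locally_finite_set H"
  shows "\<forall>A. bounded A \<longrightarrow> (\<forall>x\<in>A. \<exists>\<epsilon>>0. \<exists>a\<in>{0::nat, 1}.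
           \<forall>B. bounded B \<and> x \<in> B \<and> diameter B < \<epsilon> \<longrightarrow> mu_H H B = a)"
proof (intro allI impI ballI)
  fix A x assume "bounded A" "x \<in> (A :: (real^'n) set)"
  define F where "F = (ball x 1 \<inter> H) - {x}"
  have fin: "finite F" using assms unfolding locally_finite_set_def F_def by auto
  define e where "e = Min (insert 1 (dist x ` F))"
  have epos: "e > 0" unfolding e_def using fin by (subst Min_gr_iff) (auto simp: F_def)
  have ele: "e \<le> 1" "\<And>y. y \<in> F \<Longrightarrow> e \<le> dist x y" unfolding e_def using fin by auto
  show "\<exists>\<epsilon>>0. \<exists>a\<in>{0::nat, 1}.
           \<forall>B. bounded B \<and> x \<in> B \<and> diameter B < \<epsilon> \<longrightarrow> mu_H H B = a"
  proof (intro exI[of _ e] conjI epos bexI[of _ "parity_pi (card ({x} \<inter> H))"] allI impI)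
    show "parity_pi (card ({x} \<inter> H)) \<in> {0, 1}" by (simp add: parity_pi_def)
    fix B assume B: "bounded B \<and> x \<in> B \<and> diameter B < e"
    have "B \<inter> H = {x} \<inter> H"
    proof (intro equalityI subsetI)
      fix y assume y: "y \<in> B \<inter> H"
      have "dist x y \<le> diameter B" using B y diameter_bounded_bound by blast
      hence d: "dist x y < e" using B by linarith
      show "y \<in> {x} \<inter> H"
      proof (rule ccontr)
        assume "y \<notin> {x} \<inter> H"
        hence "y \<in> F" using y d ele(1) unfolding F_def by auto
        thus False using ele(2) d by fastforce
      qed
    next
      fix y assume "y \<in> {x} \<inter> H" thus "y \<in> B \<inter> H" using B by auto
    qed
    thus "mu_H H B = parity_pi (card ({x} \<inter> H))" by (simp add: mu_H_def)
  qed
qed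

end
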